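(* Let $I=1$ and let $\mathbf s_{T,u}^{\mathrm T}$ denote the $u$-th row of $\mathbf S_T$ for some $u\in\{1,\dots,U\}$. Suppose the jammer transmits $\mathbf w_T=\mathbf s_{T,u}$ during the pilot phase and some fixed $\mathbf w_D\in\mathcal S^D$ during the data phase (so $\|\mathbf w_D\|_0=D$). If $\mathbf S_D$ is uniformly distributed on $\mathcal S^{U\times D}$, then the jammer is eclipsed (with channel estimation) with probability at least $1-4^{-D}$.
   Context: Let $U,T,D$ be positive integers with $T\ge U$, $\mathcal S=\{(\pm1\pm i)/\sqrt2\}\subset\mathbb C$ (QPSK), and $\mathbf S_T\in\mathbb C^{U\times T}$ a fixed pilot matrix of full row rank $U$; $\mathbf A^\dagger$ is the Moore–Penrose pseudoinverse. Eclipsing with channel estimation (single-antenna case): given $\mathbf S_D\in\mathcal S^{U\times D}$, $\mathbf w_T\in\mathbb C^T$, $\mathbf w_D\in\mathbb C^D$, the jammer is eclipsed if there exists $\tilde{\mathbf S}_D\in\mathcal S^{U\times D}\setminus\{\mathbf S_D\}$ such that $\begin{bmatrix}\mathbf S_D-\tilde{\mathbf S}_D\\ \mathbf w_D^{\mathrm T}-\mathbf w_T^{\mathrm T}\mathbf S_T^\dagger\tilde{\mathbf S}_D\end{bmatrix}$ has rank at most $1$. *)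

theory Defs
  imports "HOL-Analysis.Analysis" "HOL-Probability.Probability"
begin

text \<open>Matrices are Cartesian-product types: a U x T complex matrix is complex^'t^'u
  (rows indexed by 'u, columns by 't). Dimensions U = CARD('u), T = CARD('t), D = CARD('d).\<close>

definition conj_transpose :: "complex^'n^'m \<Rightarrow> complex^'m^'n" where
  "conj_transpose A = (\<chi> i j. cnj (A $ j $ i))"

definition penrose :: "complex^'n^'m \<Rightarrow> complex^'m^'n \<Rightarrow> bool" where
  "penrose A X \<longleftrightarrow> A ** X ** A = A \<and> X ** A ** X = X \<and>
     conj_transpose (A ** X) = A ** X \<and> conj_transpose (X ** A) = X ** A"

definition pinv :: "complex^'n^'m \<Rightarrow> complex^'m^'n" where
  "pinv A = (THE X. penrose A X)"

definition QPSK :: "complex set" where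
  "QPSK = {(a + b * \<i>) / complex_of_real (sqrt 2) | a b. a \<in> {-1, 1} \<and> b \<in> {-1, 1}}"

definition qpsk_vecs :: "(complex^'d) set" where
  "qpsk_vecs = {w. \<forall>j. w $ j \<in> QPSK}"

definition qpsk_mats :: "(complex^'d^'u) set" where
  "qpsk_mats = {S. \<forall>i j. S $ i $ j \<in> QPSK}"

text \<open>Stack a U x D matrix on top of a row of length D: a (U+1) x D matrix, the extra
  (last) row being indexed by None.\<close>
definition stack_row :: "'a^'d^'u \<Rightarrow> 'a^'d \<Rightarrow> 'a^'d^('u option)" where
  "stack_row A r = (\<chi> i. case i of Some k \<Rightarrow> A $ k | None \<Rightarrow> r)"

definition eclipsed :: "complex^'t^'u \<Rightarrow> complex^'t \<Rightarrow> complex^'d \<Rightarrow> complex^'d^'u \<Rightarrow> bool" where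
  "eclipsed S_T w_T w_D S_D \<longleftrightarrow>
     (\<exists>S'. S' \<in> qpsk_mats \<and> S' \<noteq> S_D \<and>
        rank (stack_row (S_D - S') (w_D - (w_T v* pinv S_T) v* S')) \<le> 1)"

end

theory Submission
  imports Defs
begin


lemma ct_mult: "conj_transpose (A ** B) = conj_transpose B ** conj_transpose (A::complex^'n^'m)"
  by (simp add: conj_transpose_def matrix_matrix_mult_def vec_eq_iff cnj_sum mult.commute)

lemma ct_ct[simp]: "conj_transpose (conj_transpose A) = (A::complex^'n^'m)"
  by (simp add: conj_transpose_def vec_eq_iff)

lemma ct_mat1[simp]: "conj_transpose (mat 1 :: complex^'n^'n) = mat 1"
  by (simp add: conj_transpose_def vec_eq_iff mat_def)

lemma penrose_unique:
  assumes "penrose A X" "penrose A Y"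
  shows "X = Y"
proof -
  let ?H = conj_transpose
  have 1: "A ** X ** A = A" "X ** A ** X = X" "?H (A ** X) = A ** X" "?H (X ** A) = X ** A"
    using assms(1) by (auto simp: penrose_def)
  have 2: "A ** Y ** A = A" "Y ** A ** Y = Y" "?H (A ** Y) = A ** Y" "?H (Y ** A) = Y ** A"
    using assms(2) by (auto simp: penrose_def)
  have "X = X ** (A ** X)" using 1 by (simp add: matrix_mul_assoc)
  also have "\<dots> = X ** (?H X ** ?H A)" using 1 by (metis ct_mult)
  also have "\<dots> = X ** (?H X ** ?H (A ** Y ** A))" using 2 by simp
  also have "\<dots> = X ** (?H (A ** X) ** ?H (A ** Y))" by (simp add: ct_mult matrix_mul_assoc)
  also have "\<dots> = X ** A ** Y" using 1 2 by (simp add: matrix_mul_assoc)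
  finally have x: "X = X ** A ** Y" .
  have "Y = (Y ** A) ** Y" using 2 by simp
  also have "\<dots> = (?H A ** ?H Y) ** Y" using 2 by (metis ct_mult)
  also have "\<dots> = (?H (A ** X ** A) ** ?H Y) ** Y" using 1 by simp
  also have "\<dots> = (?H (X ** A) ** ?H (Y ** A)) ** Y" by (simp add: ct_mult matrix_mul_assoc)
  also have "\<dots> = X ** A ** Y ** A ** Y" using 1 2 by (simp add: matrix_mul_assoc)
  also have "\<dots> = X ** A ** Y" using 2 by (metis matrix_mul_assoc)
  finally show ?thesis using x by simp
qed



lemma vm_rows: "x v* (S::'a::comm_ring_1^'t^'u) = (\<Sum>i\<in>UNIV. x $ i *s row i S)"
  by (simp add: vec_eq_iff vector_matrix_mult_def row_def sum_component mult.commute)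

lemma fullrank_inj:
  fixes S :: "complex^'t^'u"
  assumes r: "rank S = CARD('u)" and x: "x v* S = 0"
  shows "x = 0"
proof (rule ccontr)
  assume nz: "x \<noteq> 0"
  let ?r = "\<lambda>i. row i S"
  have R: "rows S = range ?r" by (auto simp: rows_def)
  have fin: "finite (rows S)" by (simp add: R)
  have "vec.dim (rows S) \<le> card (rows S)"
    using fin by (intro vec.dim_le_card) (auto intro: vec.span_base)
  moreover have "card (rows S) \<le> CARD('u)" unfolding R by (rule card_image_le) simp
  ultimately have c: "card (rows S) = CARD('u)" "card (rows S) = vec.dim (rows S)"
    using r by (auto simp: row_rank_def_gen)
  have inj: "inj ?r" using c(1) unfolding R by (simp add: inj_on_iff_eq_card)
  have ind: "vec.independent (rows S)"
    using vec.card_eq_dim[of "rows S" "rows S"] c(2) fin by (auto intro: vec.span_base)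
  define c where "c v = x $ (inv ?r v)" for v
  have "(\<Sum>v\<in>rows S. c v *s v) = (\<Sum>i\<in>UNIV. c (?r i) *s ?r i)"
    unfolding R by (rule sum.reindex[OF inj, unfolded comp_def])
  also have "\<dots> = (\<Sum>i\<in>UNIV. x $ i *s ?r i)"
    by (simp add: c_def inv_f_f[OF inj])
  also have "\<dots> = 0" using x by (simp add: vm_rows)
  finally have s0: "(\<Sum>v\<in>rows S. c v *s v) = 0" .
  obtain i where "x $ i \<noteq> 0" using nz by (auto simp: vec_eq_iff)
  hence "\<exists>v\<in>rows S. c v \<noteq> 0" by (auto simp: R c_def inv_f_f[OF inj])
  hence "vec.dependent (rows S)" using s0 vec.dependent_finite[OF fin] by blast
  thus False using ind by simp
qed



lemma gram_inj:
  fixes S :: "complex^'t^'u"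
  assumes r: "rank S = CARD('u)" and x: "(S ** conj_transpose S) *v x = 0"
  shows "x = 0"
proof -
  define y where "y = conj_transpose S *v x"
  define xc where "xc = (\<chi> i. cnj (x $ i))"
  have Sy: "S *v y = 0" using x by (simp add: y_def matrix_vector_mul_assoc)
  have xcS: "xc v* S = (\<chi> j. cnj (y $ j))"
    by (simp add: vec_eq_iff xc_def y_def vector_matrix_mult_def matrix_vector_mult_def
        conj_transpose_def cnj_sum mult.commute)
  have "(\<Sum>j\<in>UNIV. (xc v* S) $ j * y $ j) = (\<Sum>i\<in>UNIV. xc $ i * (S *v y) $ i)"
  proof -
    have "(\<Sum>j\<in>UNIV. (xc v* S) $ j * y $ j) = (\<Sum>j\<in>UNIV. \<Sum>i\<in>UNIV. xc $ i * (S $ i $ j * y $ j))"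
      by (simp add: vector_matrix_mult_def sum_distrib_right sum_distrib_left ac_simps)
    also have "\<dots> = (\<Sum>i\<in>UNIV. \<Sum>j\<in>UNIV. xc $ i * (S $ i $ j * y $ j))"
      by (rule sum.swap)
    also have "\<dots> = (\<Sum>i\<in>UNIV. xc $ i * (S *v y) $ i)"
      by (simp add: matrix_vector_mult_def sum_distrib_left)
    finally show ?thesis .
  qed
  also have "\<dots> = 0" by (simp add: Sy)
  finally have "(\<Sum>j\<in>UNIV. y $ j * cnj (y $ j)) = 0" by (simp add: xcS mult.commute)
  moreover have "\<And>j. y $ j * cnj (y $ j) = complex_of_real ((norm (y $ j))^2)"
    by (simp only: complex_norm_square)
  ultimately have "(\<Sum>j\<in>UNIV. complex_of_real ((norm (y $ j))^2)) = 0"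
    by simp
  hence "(\<Sum>j\<in>UNIV. (norm (y $ j))^2) = 0"
    by (metis of_real_eq_0_iff of_real_sum)
  hence "\<forall>j\<in>UNIV. (norm (y $ j))^2 = 0"
    by (subst (asm) sum_nonneg_eq_0_iff) auto
  hence "y = 0" by (simp add: vec_eq_iff)
  hence "xc v* S = 0" by (simp add: xcS vec_eq_iff)
  hence "xc = 0" using fullrank_inj[OF r] by blast
  thus "x = 0" by (simp add: xc_def vec_eq_iff)
qed

lemma penrose_exists:
  fixes S :: "complex^'t^'u"
  assumes r: "rank S = CARD('u)"
  shows "\<exists>X. penrose S X"
proof -
  let ?H = conj_transpose
  define G where "G = S ** ?H S"
  have "\<exists>M. M ** G = mat 1"
    unfolding matrix_left_invertible_ker(1) G_def using gram_inj[OF r] by blast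
  then obtain M where M: "M ** G = mat 1" by blast
  hence M2: "G ** M = mat 1" by (simp add: matrix_left_right_inverse)
  have HG: "?H G = G" by (simp add: G_def ct_mult)
  have "?H G ** ?H M = mat 1" using M by (metis ct_mult ct_mat1)
  hence GM': "G ** ?H M = mat 1" using HG by simp
  have HM: "?H M = M"
    by (metis GM' M matrix_mul_assoc matrix_mul_lid matrix_mul_rid)
  define X where "X = ?H S ** M"
  have SX: "S ** X = mat 1" using M2 by (simp add: X_def G_def matrix_mul_assoc)
  have "penrose S X"
    unfolding penrose_def
  proof (intro conjI)
    show "S ** X ** S = S" by (simp add: SX)
    show "X ** S ** X = X" by (metis SX matrix_mul_assoc matrix_mul_rid)
    show "?H (S ** X) = S ** X" by (simp add: SX)
    show "?H (X ** S) = X ** S" by (simp add: X_def ct_mult HM matrix_mul_assoc)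
  qed
  thus ?thesis by blast
qed

lemma pinv_penrose:
  fixes S :: "complex^'t^'u"
  assumes r: "rank S = CARD('u)"
  shows "penrose S (pinv S)"
  unfolding pinv_def using penrose_exists[OF r] penrose_unique by (metis theI)

lemma row_pinv:
  fixes S :: "complex^'t^'u"
  assumes r: "rank S = CARD('u)"
  shows "(S $ u) v* pinv S = axis u 1"
proof -
  have e: "axis u 1 v* S = S $ u"
    unfolding vec_eq_iff vector_matrix_mult_def axis_def by (auto simp: mult_if_delta)
  have "S ** pinv S ** S = S" using pinv_penrose[OF r] by (simp add: penrose_def)
  hence "((S $ u) v* pinv S) v* S = axis u 1 v* S"
    by (metis e vector_matrix_mul_assoc)
  hence "((S $ u) v* pinv S - axis u 1) v* S = 0"
    by (simp add: vector_matrix_mult_def vec_eq_iff algebra_simps sum_subtractf)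
  thus ?thesis using fullrank_inj[OF r] by (metis eq_iff_diff_eq_0)
qed


lemma t1: fixes w_D :: "complex^'d" and S_D :: "complex^'d^'u"
  assumes w: "w_D \<in> qpsk_vecs" and S: "S_D \<in> qpsk_mats"
  shows "(\<chi> i. if i = u then w_D else S_D $ i) \<in> qpsk_mats"
  using w S by (simp add: qpsk_mats_def qpsk_vecs_def)
lemma t2: fixes w_D :: "complex^'d" and S' :: "complex^'d^'u"
  assumes "rank (stack_row (S_D - S') (0::complex^'d)) \<le> 1" "S' \<in> qpsk_mats" "S' \<noteq> S_D"
   "w_D - (S_T $ u v* pinv S_T) v* S' = 0"
  shows  "eclipsed S_T (S_T $ u) w_D S_D"
  unfolding eclipsed_def using assms by auto
lemma t3: fixes w_D :: "complex^'d" and S_D :: "complex^'d^'u"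
  assumes ne: "S_D $ u \<noteq> w_D"
  shows "(\<chi> i. if i = u then w_D else S_D $ i) \<noteq> S_D"
proof
  assume "(\<chi> i. if i = u then w_D else S_D $ i) = S_D"
  hence "(\<chi> i. if i = u then w_D else S_D $ i) $ u = S_D $ u" by simp
  thus False using ne by simp
qed
lemma t4: "axis u 1 v* (S'::complex^'d^'u) = S' $ u"
    unfolding vec_eq_iff vector_matrix_mult_def axis_def by (auto simp: mult_if_delta)
lemma t5: fixes M :: "complex^'d^'v"
  assumes rows: "rows M \<subseteq> vec.span {rr}"
  shows "rank M \<le> 1"
proof -
  have "vec.dim (rows M) \<le> card {rr}" by (rule vec.dim_le_card[OF rows]) simp
  thus ?thesis by (simp add: row_rank_def_gen)
qed
lemma t6: fixes w_D :: "complex^'d" and S_D :: "complex^'d^'u"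
  shows "rows (stack_row (S_D - (\<chi> i. if i = u then w_D else S_D $ i)) (0::complex^'d))
     \<subseteq> vec.span {S_D $ u - w_D}" (is "rows (stack_row (S_D - ?S') 0) \<subseteq> _")
proof
  fix v assume "v \<in> rows (stack_row (S_D - ?S') (0::complex^'d))"
  then obtain i where v: "v = row i (stack_row (S_D - ?S') 0)" by (auto simp: rows_def)
  show "v \<in> vec.span {S_D $ u - w_D}"
  proof (cases i)
    case None
    hence "v = 0" by (simp add: v row_def stack_row_def vec_eq_iff)
    thus ?thesis by (simp add: vec.span_zero)
  next
    case (Some k)
    show ?thesis
    proof (cases "k = u")
      case True
      hence "v = S_D $ u - w_D" using Some by (simp add: v row_def stack_row_def vec_eq_iff)
      thus ?thesis by (simp add: vec.span_base)
    next
      case False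
      hence "v = 0" using Some by (simp add: v row_def stack_row_def vec_eq_iff)
      thus ?thesis by (simp add: vec.span_zero)
    qed
  qed
qed

lemma eclipse_row:
  fixes S_T :: "complex^'t^'u" and w_D :: "complex^'d"
  assumes r: "rank S_T = CARD('u)" and w: "w_D \<in> qpsk_vecs" and S: "S_D \<in> qpsk_mats"
    and ne: "S_D $ u \<noteq> w_D"
  shows "eclipsed S_T (S_T $ u) w_D S_D"
proof (rule t2)
  let ?S' = "(\<chi> i. if i = u then w_D else S_D $ i)"
  show "?S' \<in> qpsk_mats" by (rule t1[OF w S])
  show "?S' \<noteq> S_D" by (rule t3[OF ne])
  show "w_D - (S_T $ u v* pinv S_T) v* ?S' = 0" by (simp add: row_pinv[OF r] t4)
  show "rank (stack_row (S_D - ?S') (0::complex^'d)) \<le> 1" by (rule t5[OF t6])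
qed


lemma vecset:
  assumes "finite (A::'a set)"
  shows "finite {v::'a^'n. \<forall>i. v$i \<in> A} \<and> card {v::'a^'n. \<forall>i. v$i \<in> A} = card A ^ CARD('n)"
proof -
  have b: "bij_betw vec_nth {v::'a^'n. \<forall>i. v$i \<in> A} (PiE UNIV (\<lambda>_. A))"
  proof (rule bij_betw_byWitness[where f'=vec_lambda])
    show "\<forall>a\<in>{v::'a^'n. \<forall>i. v$i \<in> A}. vec_lambda (vec_nth a) = a" by (simp add: vec_nth_inverse)
    show "\<forall>a'\<in>PiE UNIV (\<lambda>_. A). vec_nth (vec_lambda a') = a'" by (simp add: vec_lambda_inverse)
    show "vec_nth ` {v::'a^'n. \<forall>i. v$i \<in> A} \<subseteq> PiE UNIV (\<lambda>_. A)"
      by (force simp: PiE_UNIV_domain Pi_iff)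
    show "vec_lambda ` PiE UNIV (\<lambda>_. A) \<subseteq> {v::'a^'n. \<forall>i. v$i \<in> A}"
      by (force simp: PiE_UNIV_domain Pi_iff)
  qed
  have "finite (PiE (UNIV::'n set) (\<lambda>_. A))" using assms by (simp add: finite_PiE)
  moreover have "card (PiE (UNIV::'n set) (\<lambda>_. A)) = card A ^ CARD('n)" by (simp add: card_PiE)
  ultimately show ?thesis by (simp add: bij_betw_finite[OF b] bij_betw_same_card[OF b])
qed

lemma QPSK_eq: "QPSK = (\<lambda>(a,b). (a + b * \<i>) / complex_of_real (sqrt 2)) ` ({-1,1::complex} \<times> {-1,1})"
proof (rule set_eqI, rule iffI)
  fix x assume "x \<in> QPSK"
  then obtain a b where x: "x = (a + b * \<i>) / complex_of_real (sqrt 2)" "a \<in> {-1,1}" "b \<in> {-1,1}"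
    unfolding QPSK_def by blast
  show "x \<in> (\<lambda>(a,b). (a + b * \<i>) / complex_of_real (sqrt 2)) ` ({-1,1::complex} \<times> {-1,1})"
    by (rule image_eqI[where x="(a,b)"]) (use x in auto)
next
  fix x assume "x \<in> (\<lambda>(a,b). (a + b * \<i>) / complex_of_real (sqrt 2)) ` ({-1,1::complex} \<times> {-1,1})"
  then obtain a b where x: "x = (a + b * \<i>) / complex_of_real (sqrt 2)" "a \<in> {-1,1}" "b \<in> {-1,1}"
    by fastforce
  thus "x \<in> QPSK" unfolding QPSK_def by blast
qed

lemma QPSK_card: "card QPSK = 4"
proof -
  define q where "q = (\<lambda>(a,b). (a + b * \<i>) / complex_of_real (sqrt 2))"
  define P where "P = ({-1,1::complex} \<times> {-1,1::complex})"
  have Q: "QPSK = q ` P" unfolding q_def P_def by (rule QPSK_eq)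
  have "inj_on q P" unfolding q_def P_def
  proof (rule inj_onI, clarify)
    fix a b c d :: complex
    assume m: "a \<in> {-1,1}" "b \<in> {-1,1}" "c \<in> {-1,1}" "d \<in> {-1,1}"
    assume "(a + b * \<i>) / complex_of_real (sqrt 2) = (c + d * \<i>) / complex_of_real (sqrt 2)"
    hence "a + b * \<i> = c + d * \<i>" by simp
    thus "a = c \<and> b = d" using m by (auto simp: complex_eq_iff)
  qed
  hence "card QPSK = card P" unfolding Q by (rule card_image)
  moreover have "card {-1,1::complex} = 2" by (simp add: complex_eq_iff)
  ultimately show ?thesis by (simp add: P_def card_cartesian_product)
qed

lemma QPSK_fin: "finite QPSK" by (simp add: QPSK_eq)

lemma vecs_card: "finite (qpsk_vecs :: (complex^'d) set) \<and> card (qpsk_vecs :: (complex^'d) set) = 4 ^ CARD('d)"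
  using vecset[OF QPSK_fin, where 'n='d] by (simp add: qpsk_vecs_def QPSK_card)

lemma mats_eq: "qpsk_mats = {S. \<forall>i. S $ i \<in> qpsk_vecs}"
  by (simp add: qpsk_mats_def qpsk_vecs_def)

lemma mats_fin: "finite (qpsk_mats :: (complex^'d^'u::finite) set)"
  unfolding mats_eq by (rule conjunct1[OF vecset[OF conjunct1[OF vecs_card]]])

lemma mats_split:
  fixes w_D :: "complex^'d" and u :: "'u::finite"
  assumes w: "w_D \<in> qpsk_vecs"
  shows "card (qpsk_mats :: (complex^'d^'u) set) = card (qpsk_vecs :: (complex^'d) set) * card {S \<in> qpsk_mats. S $ u = w_D}"
proof -
  let ?V = "qpsk_vecs :: (complex^'d) set"
  let ?M = "qpsk_mats :: (complex^'d^'u) set"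
  let ?B = "{S \<in> (qpsk_mats :: (complex^'d^'u) set). S $ u = w_D}"
  define f :: "complex^'d^'u \<Rightarrow> (complex^'d) \<times> (complex^'d^'u)"
    where "f S = (S $ u, \<chi> i. if i = u then w_D else S $ i)" for S
  define g :: "(complex^'d) \<times> (complex^'d^'u) \<Rightarrow> complex^'d^'u"
    where "g p = (\<chi> i. if i = u then fst p else snd p $ i)" for p
  have "bij_betw f ?M (?V \<times> ?B)"
  proof (rule bij_betw_byWitness[where f'=g])
    show "\<forall>a\<in>?M. g (f a) = a"
      by (simp add: f_def g_def vec_eq_iff)
    show "\<forall>a'\<in>?V \<times> ?B. f (g a') = a'"
    proof
      fix p assume "p \<in> ?V \<times> ?B"
      then obtain v B where p: "p = (v,B)" "B $ u = w_D" by blast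
      hence "(\<chi> i. if i = u then w_D else g (v,B) $ i) = B"
        by (simp add: vec_eq_iff g_def)
      moreover have "g (v,B) $ u = v" by (simp add: g_def)
      ultimately have "f (g (v,B)) = (v,B)" by (simp add: f_def)
      thus "f (g p) = p" using p(1) by simp
    qed
    show "f ` ?M \<subseteq> ?V \<times> ?B"
      using w by (auto simp: mats_eq f_def)
    show "g ` (?V \<times> ?B) \<subseteq> ?M"
      by (auto simp: mats_eq g_def)
  qed
  hence "card ?M = card (?V \<times> ?B)"
    by (rule bij_betw_same_card)
  thus ?thesis by (simp add: card_cartesian_product)
qed



theorem theorem4:
  fixes S_T :: "complex^'t^'u" and u :: 'u and w_D :: "complex^'d"
  assumes "CARD('u) \<le> CARD('t)"
    and "rank S_T = CARD('u)"
    and "w_D \<in> qpsk_vecs"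
  shows "measure_pmf.prob (pmf_of_set qpsk_mats) {S_D. eclipsed S_T (S_T $ u) w_D S_D}
           \<ge> 1 - 1 / 4 ^ CARD('d)"
proof -
  let ?M = "qpsk_mats :: (complex^'d^'u) set"
  let ?V = "qpsk_vecs :: (complex^'d) set"
  let ?B = "{S \<in> ?M. S $ u = w_D}"
  let ?E = "{S_D. eclipsed S_T (S_T $ u) w_D S_D}"
  have fin: "finite ?M" by (rule mats_fin)
  have ne: "?M \<noteq> {}"
  proof -
    have "(\<chi> i. w_D) \<in> ?M" using assms(3) by (simp add: mats_eq)
    thus ?thesis by blast
  qed
  have sub: "?M - ?B \<subseteq> ?M \<inter> ?E"
    using eclipse_row[OF assms(2) assms(3)] by blast
  have cB: "card ?B \<le> card ?M" using fin by (intro card_mono) auto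
  have "card (?M - ?B) = card ?M - card ?B" using fin by (intro card_Diff_subset) auto
  hence le: "card ?M - card ?B \<le> card (?M \<inter> ?E)"
    using card_mono[OF _ sub] fin by simp
  have split: "card ?M = 4 ^ CARD('d) * card ?B"
    using mats_split[OF assms(3), of u] vecs_card[where 'd='d] by simp
  have pos: "card ?M > 0" using fin ne by (simp add: card_gt_0_iff)
  have prob: "measure_pmf.prob (pmf_of_set ?M) ?E = card (?M \<inter> ?E) / card ?M"
    by (rule measure_pmf_of_set[OF ne fin])
  have "1 - 1 / 4 ^ CARD('d) = (real (card ?M) - real (card ?B)) / real (card ?M)"
    using pos unfolding split by (simp add: field_simps)
  also have "\<dots> = real (card ?M - card ?B) / real (card ?M)" using cB by (simp add: of_nat_diff)
  also have "\<dots> \<le> real (card (?M \<inter> ?E)) / real (card ?M)"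
    using le pos by (intro divide_right_mono) auto
  finally show ?thesis using prob by simp
qed


end
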